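(* Let $X$ be a real Banach space with $\operatorname{dens} X = \kappa$. If $\operatorname{cf}(\kappa) \geq \mathfrak{c}^+$, then $X$ contains no overcomplete set.
   Context: $\operatorname{dens}$ denotes the density character, $\operatorname{cf}$ the cofinality, $\mathfrak{c}$ the cardinality of the continuum and $\mathfrak{c}^+$ its successor cardinal. A subset $S$ of a Banach space $X$ with $|S| = \operatorname{dens} X$ is called overcomplete if every subset $\Lambda \subseteq S$ with $|\Lambda| = |S|$ is linearly dense in $X$. *)

theory Defs
  imports "HOL-Analysis.Analysis"
begin

text \<open>Cardinals are represented by the well-orders card_of A (initial-ordinal-like
  well-orders on A) from HOL's BNF cardinal library; ordLeq / ordIso compare them.\<close>

text \<open>D realises the density character: D is dense and has least cardinality
  among all dense subsets. Then dens X = card_of D.\<close>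
definition dens_witness :: "'a::real_normed_vector set \<Rightarrow> bool" where
  "dens_witness D \<longleftrightarrow> closure D = UNIV \<and>
     (\<forall>D'::'a set. closure D' = UNIV \<longrightarrow> (card_of D, card_of D') \<in> ordLeq)"

definition overcomplete_set :: "'a::real_normed_vector set \<Rightarrow> bool" where
  "overcomplete_set S \<longleftrightarrow>
     (\<exists>D::'a set. dens_witness D \<and> (card_of S, card_of D) \<in> ordIso) \<and>
     (\<forall>L. L \<subseteq> S \<and> (card_of L, card_of S) \<in> ordIso \<longrightarrow> closure (span L) = UNIV)"

text \<open>B is a cofinal subset of the well-order r. The cofinality of r is the
  least cardinality of such a B.\<close>
definition cofinal_in :: "'b rel \<Rightarrow> 'b set \<Rightarrow> bool" where
  "cofinal_in r B \<longleftrightarrow> B \<subseteq> Field r \<and> (\<forall>a\<in>Field r. \<exists>b\<in>B. (a, b) \<in> r)"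

definition cf_geq :: "'b rel \<Rightarrow> 'c rel \<Rightarrow> bool" where
  "cf_geq r k \<longleftrightarrow> (\<forall>B. cofinal_in r B \<longrightarrow> (k, card_of B) \<in> ordLeq)"

end

theory Submission
  imports Defs
begin

unbundle cardinal_syntax


definition lingraph :: "real \<Rightarrow> ('a::real_normed_vector \<times> real) set \<Rightarrow> bool" where
  "lingraph C G \<longleftrightarrow> (\<forall>x a b. (x,a)\<in>G \<longrightarrow> (x,b)\<in>G \<longrightarrow> a=b) \<and> (0,0)\<in>G \<and>
    (\<forall>x a y b. (x,a)\<in>G \<longrightarrow> (y,b)\<in>G \<longrightarrow> (x+y,a+b)\<in>G) \<and>
    (\<forall>x a c. (x,a)\<in>G \<longrightarrow> (c *\<^sub>R x, c*a)\<in>G) \<and> (\<forall>x a. (x,a)\<in>G \<longrightarrow> a \<le> C * norm x)"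

lemma lingraph_chain_ub:
  assumes "lingraph C G0" and ch: "Ch \<in> chains {G. lingraph C G \<and> G0 \<subseteq> G}"
  shows "\<exists>U\<in>{G. lingraph C G \<and> G0 \<subseteq> G}. \<forall>X\<in>Ch. X \<subseteq> U"
proof (cases "Ch = {}")
  case True then show ?thesis using assms by auto
next
  case False
  have sub: "Ch \<subseteq> {G. lingraph C G \<and> G0 \<subseteq> G}" using ch by (rule chainsD2)
  have two: "\<exists>G\<in>Ch. p \<in> G \<and> q \<in> G" if P: "p \<in> \<Union>Ch" "q \<in> \<Union>Ch" for p q
  proof -
    obtain G1 where "G1\<in>Ch" "p\<in>G1" using P(1) by blast
    moreover obtain G2 where "G2\<in>Ch" "q\<in>G2" using P(2) by blast
    ultimately show ?thesis using chainsD[OF ch, of G1 G2] by blast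
  qed
  have "lingraph C (\<Union>Ch)"
    unfolding lingraph_def
  proof (intro conjI allI impI)
    fix x a b assume "(x,a)\<in>\<Union>Ch" "(x,b)\<in>\<Union>Ch"
    then obtain G where "G\<in>Ch" "(x,a)\<in>G" "(x,b)\<in>G" using two by blast
    then show "a = b" using sub unfolding lingraph_def by blast
  next
    obtain G where "G \<in> Ch" using False by auto
    then show "(0,0) \<in> \<Union>Ch" using sub unfolding lingraph_def by blast
  next
    fix x a y b assume "(x,a)\<in>\<Union>Ch" "(y,b)\<in>\<Union>Ch"
    then obtain G where "G\<in>Ch" "(x,a)\<in>G" "(y,b)\<in>G" using two by blast
    then show "(x+y,a+b) \<in> \<Union>Ch" using sub unfolding lingraph_def by blast
  next
    fix x a c assume "(x,a)\<in>\<Union>Ch"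
    then obtain G where "G\<in>Ch" "(x,a)\<in>G" by blast
    then show "(c *\<^sub>R x, c*a) \<in> \<Union>Ch" using sub unfolding lingraph_def by blast
  next
    fix x a assume "(x,a)\<in>\<Union>Ch"
    then obtain G where "G\<in>Ch" "(x,a)\<in>G" by blast
    then show "a \<le> C * norm x" using sub unfolding lingraph_def by blast
  qed
  moreover have "G0 \<subseteq> \<Union>Ch" using False sub by blast
  ultimately show ?thesis by blast
qed

lemma ext_lingraph:
  assumes lg: "lingraph C M" and x0: "x0 \<notin> Domain M"
  and domM': "\<And>y b t. (y,b)\<in>M \<Longrightarrow> b + t * s \<le> C * norm (y + t *\<^sub>R x0)"
  and M'_def: "M' = {(y + t *\<^sub>R x0, b + t * s) | y b t. (y,b) \<in> M}"
  shows "lingraph C M'"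
proof -
  have sv: "\<And>x a b. (x,a)\<in>M \<Longrightarrow> (x,b)\<in>M \<Longrightarrow> a=b"
   and z: "(0,0)\<in>M"
   and ad: "\<And>x a y b. (x,a)\<in>M \<Longrightarrow> (y,b)\<in>M \<Longrightarrow> (x+y,a+b)\<in>M"
   and sc: "\<And>x a c. (x,a)\<in>M \<Longrightarrow> (c *\<^sub>R x, c*a)\<in>M"
   and dom: "\<And>x a. (x,a)\<in>M \<Longrightarrow> a \<le> C * norm x" using lg unfolding lingraph_def by blast+
  have memM': "\<exists>yy bb tt. (yy,bb)\<in>M \<and> p = yy + tt *\<^sub>R x0 \<and> q = bb + tt * s" if "(p,q) \<in> M'" for p q
    using that unfolding M'_def by blast
  have uniq: "t = t' \<and> y = y'" if "(y,b)\<in>M" "(y',b')\<in>M" "y + t *\<^sub>R x0 = y' + t' *\<^sub>R x0" for y b y' b' t t'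
  proof (cases "t = t'")
    case True then show ?thesis using that by simp
  next
    case False
    have "(y' + (-1) *\<^sub>R y, b' + (-1) * b) \<in> M" using ad[OF that(2) sc[OF that(1)]] .
    then have "((1/(t-t')) *\<^sub>R (y' + (-1) *\<^sub>R y), (1/(t-t')) * (b' + (-1) * b)) \<in> M" by (rule sc)
    moreover have "(1/(t-t')) *\<^sub>R (y' + (-1) *\<^sub>R y) = x0"
    proof -
      have "y' - y = (t - t') *\<^sub>R x0" using that(3) by (simp add: algebra_simps)
      then show ?thesis using False by simp
    qed
    ultimately have "x0 \<in> Domain M" by (metis Domain.intros)
    then show ?thesis using x0 by blast
  qed
  show "lingraph C M'"
    unfolding lingraph_def
  proof (intro conjI allI impI)
    fix x a b assume A: "(x,a)\<in>M'" "(x,b)\<in>M'"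
    obtain y1 b1 t1 where 1: "(y1,b1)\<in>M" "x = y1 + t1 *\<^sub>R x0" "a = b1 + t1 * s"
      using memM'[OF A(1)] by blast
    obtain y2 b2 t2 where 2: "(y2,b2)\<in>M" "x = y2 + t2 *\<^sub>R x0" "b = b2 + t2 * s"
      using memM'[OF A(2)] by blast
    from 1 2 show "a = b" using uniq[of y1 b1 y2 b2 t1 t2] sv by metis
  next
    show "(0,0) \<in> M'" unfolding M'_def using z by force
  next
    fix x a y b assume A: "(x,a)\<in>M'" "(y,b)\<in>M'"
    obtain y1 b1 t1 where 1: "(y1,b1)\<in>M" "x = y1 + t1 *\<^sub>R x0" "a = b1 + t1 * s"
      using memM'[OF A(1)] by blast
    obtain y2 b2 t2 where 2: "(y2,b2)\<in>M" "y = y2 + t2 *\<^sub>R x0" "b = b2 + t2 * s"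
      using memM'[OF A(2)] by blast
    have e: "(x+y, a+b) = ((y1+y2) + (t1+t2) *\<^sub>R x0, (b1+b2) + (t1+t2) * s)"
      unfolding 1(2,3) 2(2,3) by (simp add: algebra_simps)
    have "(y1+y2, b1+b2) \<in> M" using ad[OF 1(1) 2(1)] .
    then have "((y1+y2) + (t1+t2) *\<^sub>R x0, (b1+b2) + (t1+t2) * s) \<in> M'"
      unfolding M'_def by blast
    then show "(x+y, a+b) \<in> M'" unfolding e .
  next
    fix x a c assume A: "(x,a)\<in>M'"
    obtain y1 b1 t1 where "(y1,b1)\<in>M" "x = y1 + t1 *\<^sub>R x0" "a = b1 + t1 * s"
      using memM'[OF A] by blast
    moreover have "(c *\<^sub>R y1 + (c*t1) *\<^sub>R x0, c * b1 + (c*t1) * s) \<in> M'"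
      unfolding M'_def using sc[OF calculation(1)] by blast
    ultimately show "(c *\<^sub>R x, c*a) \<in> M'" by (simp add: algebra_simps)
  next
    fix x a assume A: "(x,a)\<in>M'"
    obtain y1 b1 t1 where "(y1,b1)\<in>M" "x = y1 + t1 *\<^sub>R x0" "a = b1 + t1 * s"
      using memM'[OF A] by blast
    then show "a \<le> C * norm x" using domM' by simp
  qed
qed

lemma lingraph_extend:
  assumes lg: "lingraph C M" and C: "C \<ge> 0" and x0: "x0 \<notin> Domain M"
  shows "\<exists>M'. lingraph C M' \<and> M \<subseteq> M' \<and> M' \<noteq> M"
proof -
  have sv: "\<And>x a b. (x,a)\<in>M \<Longrightarrow> (x,b)\<in>M \<Longrightarrow> a=b"
   and z: "(0,0)\<in>M"
   and ad: "\<And>x a y b. (x,a)\<in>M \<Longrightarrow> (y,b)\<in>M \<Longrightarrow> (x+y,a+b)\<in>M"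
   and sc: "\<And>x a c. (x,a)\<in>M \<Longrightarrow> (c *\<^sub>R x, c*a)\<in>M"
   and dom: "\<And>x a. (x,a)\<in>M \<Longrightarrow> a \<le> C * norm x" using lg unfolding lingraph_def by blast+
  define L where "L = {b - C * norm (y - x0) | y b. (y,b) \<in> M}"
  define s where "s = Sup L"
  have key: "b - C * norm (y - x0) \<le> C * norm (z + x0) - c" if "(y,b)\<in>M" "(z,c)\<in>M" for y b z c
  proof -
    have "b + c \<le> C * norm (y + z)" using dom[OF ad[OF that]] .
    also have "norm (y + z) \<le> norm (y - x0) + norm (z + x0)"
      using norm_triangle_ineq[of "y - x0" "z + x0"] by simp
    then have "C * norm (y + z) \<le> C * norm (y - x0) + C * norm (z + x0)"
      using C by (metis distrib_left mult_left_mono)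
    finally show ?thesis by simp
  qed
  have Lne: "L \<noteq> {}" using z unfolding L_def by blast
  have Lbdd: "bdd_above L" unfolding L_def bdd_above_def using key z by blast
  have s_up: "b - C * norm (y - x0) \<le> s" if "(y,b)\<in>M" for y b
    unfolding s_def by (rule cSup_upper[OF _ Lbdd]) (use that L_def in blast)
  have s_lo: "s \<le> C * norm (z + x0) - c" if "(z,c)\<in>M" for z c
    unfolding s_def by (rule cSup_least[OF Lne]) (use key that L_def in blast)
  define M' where "M' = {(y + t *\<^sub>R x0, b + t * s) | y b t. (y,b) \<in> M}"
  have domM': "b + t * s \<le> C * norm (y + t *\<^sub>R x0)" if "(y,b)\<in>M" for y b t
  proof -
    consider "t = 0" | "t > 0" | "t < 0" by linarith
    then show ?thesis
    proof cases
      case 1 then show ?thesis using dom[OF that] by simp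
    next
      case 2
      have "s \<le> C * norm ((1/t) *\<^sub>R y + x0) - (1/t) * b" using s_lo[OF sc[OF that]] .
      then have "t * s \<le> t * (C * norm ((1/t) *\<^sub>R y + x0) - (1/t) * b)" using 2 by (simp add: mult_left_mono)
      also have "\<dots> = C * (t * norm ((1/t) *\<^sub>R y + x0)) - b" using 2 by (simp add: algebra_simps)
      also have "t * norm ((1/t) *\<^sub>R y + x0) = norm (y + t *\<^sub>R x0)"
      proof -
        have "y + t *\<^sub>R x0 = t *\<^sub>R ((1/t) *\<^sub>R y + x0)" using 2 by (simp add: algebra_simps)
        then show ?thesis using 2 by simp
      qed
      finally show ?thesis by simp
    next
      case 3
      define u where "u = - t"
      have u: "u > 0" using 3 u_def by simp
      have "(1/u) * b - C * norm ((1/u) *\<^sub>R y - x0) \<le> s" using s_up[OF sc[OF that]] .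
      then have "u * ((1/u) * b - C * norm ((1/u) *\<^sub>R y - x0)) \<le> u * s" using u by (simp add: mult_left_mono)
      moreover have "u * ((1/u) * b - C * norm ((1/u) *\<^sub>R y - x0)) = b - C * (u * norm ((1/u) *\<^sub>R y - x0))"
        using u by (simp add: algebra_simps)
      moreover have "u * norm ((1/u) *\<^sub>R y - x0) = norm (y + t *\<^sub>R x0)"
      proof -
        have "y + t *\<^sub>R x0 = u *\<^sub>R ((1/u) *\<^sub>R y - x0)" using u u_def by (simp add: algebra_simps)
        then show ?thesis using u by simp
      qed
      ultimately have "b - C * norm (y + t *\<^sub>R x0) \<le> u * s" by metis
      moreover have "t * s = - (u * s)" by (simp add: u_def)
      ultimately show ?thesis by linarith
    qed
  qed
  have "lingraph C M'" using ext_lingraph[OF lg x0 domM' M'_def] .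
  moreover have "M \<subseteq> M'"
  proof
    fix p assume "p \<in> M"
    then obtain y b where "p = (y,b)" "(y,b)\<in>M" by (cases p) auto
    then show "p \<in> M'" unfolding M'_def by (rule_tac CollectI, rule_tac exI[of _ y], rule_tac exI[of _ b], rule_tac exI[of _ 0]) simp
  qed
  moreover have "(x0, s) \<in> M'" unfolding M'_def using z
    by (rule_tac CollectI, rule_tac exI[of _ 0], rule_tac exI[of _ 0], rule_tac exI[of _ 1]) simp
  then have "M' \<noteq> M" using x0 by blast
  ultimately show ?thesis by blast
qed

lemma hahn_banach:
  assumes "lingraph C G0" and C: "C \<ge> 0"
  shows "\<exists>f. bounded_linear f \<and> (\<forall>x a. (x,a)\<in>G0 \<longrightarrow> f x = a)"
proof -
  define A where "A = {G. lingraph C G \<and> G0 \<subseteq> G}"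
  have "\<forall>Ch\<in>chains A. \<exists>U\<in>A. \<forall>X\<in>Ch. X \<subseteq> U"
    unfolding A_def using lingraph_chain_ub[OF assms(1)] by blast
  from Zorn_Lemma2[OF this] obtain M where M: "M \<in> A" and max: "\<forall>X\<in>A. M \<subseteq> X \<longrightarrow> X = M"
    by blast
  have G0M: "G0 \<subseteq> M" using M unfolding A_def by blast
  have lg: "lingraph C M" using M unfolding A_def by blast
  have sv: "\<And>x a b. (x,a)\<in>M \<Longrightarrow> (x,b)\<in>M \<Longrightarrow> a=b"
   and ad: "\<And>x a y b. (x,a)\<in>M \<Longrightarrow> (y,b)\<in>M \<Longrightarrow> (x+y,a+b)\<in>M"
   and sc: "\<And>x a c. (x,a)\<in>M \<Longrightarrow> (c *\<^sub>R x, c*a)\<in>M"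
   and dom: "\<And>x a. (x,a)\<in>M \<Longrightarrow> a \<le> C * norm x" using lg unfolding lingraph_def by blast+
  have D: "Domain M = UNIV"
  proof (rule ccontr)
    assume "Domain M \<noteq> UNIV"
    then obtain x0 where "x0 \<notin> Domain M" by auto
    from lingraph_extend[OF lg C this] obtain M' where "lingraph C M'" "M \<subseteq> M'" "M' \<noteq> M" by blast
    then have "M' \<in> A" using G0M unfolding A_def by blast
    then show False using max \<open>M \<subseteq> M'\<close> \<open>M' \<noteq> M\<close> by blast
  qed
  define f where "f x = (THE a. (x,a) \<in> M)" for x
  have fM: "(x, f x) \<in> M" for x
  proof -
    obtain a where a: "(x,a)\<in>M" using D by blast
    then have "f x = a" unfolding f_def by (rule the_equality) (use sv a in blast)
    then show ?thesis using a by simp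
  qed
  have fe: "f x = a" if "(x,a)\<in>M" for x a using sv[OF that fM] by simp
  have "bounded_linear f"
  proof (rule bounded_linear_intro[where K = C])
    show "f (x + y) = f x + f y" for x y using fe[OF ad[OF fM fM]] .
    show "f (r *\<^sub>R x) = r *\<^sub>R f x" for r x using fe[OF sc[OF fM]] by simp
    show "norm (f x) \<le> norm x * C" for x
    proof -
      have "f x \<le> C * norm x" using dom[OF fM] .
      moreover have "- f x \<le> C * norm x" using dom[OF sc[OF fM[of x], of "-1"]] by simp
      ultimately show ?thesis by (simp add: abs_le_iff mult.commute)
    qed
  qed
  moreover have "\<forall>x a. (x,a)\<in>G0 \<longrightarrow> f x = a" using G0M fe by blast
  ultimately show ?thesis by blast
qed




lemma wo_props:
  fixes D :: "'a set"
  shows "refl_on D (card_of D)" "trans (card_of D)" "total_on D (card_of D)" "antisym (card_of D)"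
  using card_of_Well_order[of D] unfolding order_on_defs Field_card_of by blast+

lemma real_less_D:
  fixes D :: "'a set"
  assumes cf: "cf_geq (card_of D) (cardSuc (card_of (UNIV :: real set)))"
  shows "|UNIV :: real set| <o (card_of D)"
proof -
  have "cofinal_in (card_of D) D"
    unfolding cofinal_in_def Field_card_of using wo_props(1)[of D] unfolding refl_on_def by blast
  then have "cardSuc |UNIV :: real set| \<le>o (card_of D)" using cf unfolding cf_geq_def by blast
  moreover have "|UNIV :: real set| <o cardSuc |UNIV :: real set|"
    by (rule cardSuc_greater[OF card_of_Card_order])
  ultimately show ?thesis using ordLess_ordLeq_trans by blast
qed

lemma times_less:
  fixes D :: "'a set" and U :: "'b set"
  assumes R: "|UNIV :: real set| <o (card_of D)" and U: "|U| <o (card_of D)"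
  shows "|(UNIV :: real set) \<times> U| <o (card_of D)"
proof -
  have infR: "\<not> finite (UNIV :: real set)" by (rule infinite_UNIV_char_0)
  consider "|U| \<le>o |UNIV :: real set|" | "|UNIV :: real set| \<le>o |U|"
    using ordLeq_total[OF card_of_Well_order card_of_Well_order] by blast
  then show ?thesis
  proof cases
    case 1
    have "|(UNIV :: real set) \<times> U| \<le>o |(UNIV :: real set) \<times> (UNIV :: real set)|"
      using card_of_Times_mono2[OF 1] .
    also have "( |(UNIV :: real set) \<times> (UNIV :: real set)|, |UNIV :: real set| ) \<in> ordIso"
      using card_of_Times_same_infinite[OF infR] .
    finally show ?thesis using R ordLeq_ordLess_trans by blast
  next
    case 2
    have infU: "\<not> finite U" using 2 infR card_of_ordLeq_finite by blast
    have "|(UNIV :: real set) \<times> U| \<le>o |U \<times> U|"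
      using card_of_Times_mono1[OF 2] .
    also have "( |U \<times> U|, |U| ) \<in> ordIso"
      using card_of_Times_same_infinite[OF infU] .
    finally show ?thesis using U ordLeq_ordLess_trans by blast
  qed
qed

lemma pigeon:
  fixes D :: "'a set" and T :: "'b set" and F :: "'b \<Rightarrow> real"
  assumes cf: "cf_geq (card_of D) (cardSuc (card_of (UNIV :: real set)))"
    and TD: "( |T|, card_of D) \<in> ordIso"
  shows "\<exists>r. ( |{t\<in>T. F t = r}|, |T| ) \<in> ordIso"
proof (rule ccontr)
  assume H: "\<not> ?thesis"
  have R: "|UNIV :: real set| <o (card_of D)" using real_less_D[OF cf] .
  have less: "|{t\<in>T. F t = r}| <o (card_of D)" for r
  proof -
    have "|{t\<in>T. F t = r}| \<le>o |T|" by (rule card_of_mono1) blast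
    then have "|{t\<in>T. F t = r}| <o |T|" using H ordLeq_iff_ordLess_or_ordIso by blast
    then show ?thesis using TD ordLess_ordIso_trans by blast
  qed
  have "\<exists>a\<in>D. |{t\<in>T. F t = r}| \<le>o |underS (card_of D) a|" for r
  proof -
    have ex: "\<exists>a\<in>Field (card_of D). ( |{t\<in>T. F t = r}|, Restr (card_of D) (underS (card_of D) a)) \<in> ordIso"
      using iffD1[OF ordLess_iff_ordIso_Restr[OF card_of_Well_order[of D] card_of_Well_order[of "{t\<in>T. F t = r}"]] less[of r]] .
    then obtain a where a: "a \<in> Field (card_of D)" "( |{t\<in>T. F t = r}|, Restr (card_of D) (underS (card_of D) a)) \<in> ordIso"
      by (rule bexE) simp
    have "card_of (Field (card_of {t\<in>T. F t = r})) \<le>o card_of (Field (Restr (card_of D) (underS (card_of D) a)))"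
      by (rule card_of_mono2[OF ordIso_imp_ordLeq[OF a(2)]])
    also have "card_of (Field (Restr (card_of D) (underS (card_of D) a))) \<le>o |underS (card_of D) a|"
      by (rule card_of_mono1[OF Field_Restr_subset])
    finally show ?thesis using a(1) unfolding Field_card_of by blast
  qed
  then obtain a where a: "\<And>r. a r \<in> D" "\<And>r. |{t\<in>T. F t = r}| \<le>o |underS (card_of D) (a r)|"
    by metis
  have "\<not> cofinal_in (card_of D) (range a)"
  proof
    assume "cofinal_in (card_of D) (range a)"
    then have "cardSuc |UNIV :: real set| \<le>o |range a|" using cf unfolding cf_geq_def by blast
    moreover have "|range a| \<le>o |UNIV :: real set|" by (rule card_of_image)
    moreover have "|UNIV :: real set| <o cardSuc |UNIV :: real set|"
      by (rule cardSuc_greater[OF card_of_Card_order])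
    ultimately show False using ordLeq_transitive not_ordLess_ordLeq by blast
  qed
  then obtain d where d: "d \<in> D" "\<And>r. (d, a r) \<notin> (card_of D)"
    unfolding cofinal_in_def Field_card_of using a(1) by blast
  have sub: "underS (card_of D) (a r) \<subseteq> underS (card_of D) d" for r
  proof
    fix x assume x: "x \<in> underS (card_of D) (a r)"
    have ne: "a r \<noteq> d" using d wo_props(1)[of D] unfolding refl_on_def by metis
    have ard: "(a r, d) \<in> (card_of D)" using wo_props(3)[of D] ne a(1)[of r] d(1) d(2)[of r]
      unfolding total_on_def by blast
    have xa: "(x, a r) \<in> (card_of D)" "x \<noteq> a r" using x unfolding underS_def by auto
    have "(x, d) \<in> (card_of D)" using wo_props(2)[of D] xa(1) ard unfolding trans_def by blast
    moreover have "x \<noteq> d"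
    proof
      assume "x = d"
      then have "(d, a r) \<in> (card_of D)" using xa by simp
      then show False using d(2) by blast
    qed
    ultimately show "x \<in> underS (card_of D) d" unfolding underS_def by blast
  qed
  define U where "U = underS (card_of D) d"
  have leU: "|{t\<in>T. F t = r}| \<le>o |U|" for r
    using a(2)[of r] card_of_mono1[OF sub[of r]] ordLeq_transitive unfolding U_def by blast
  have "\<exists>g. inj_on g {t\<in>T. F t = r} \<and> g ` {t\<in>T. F t = r} \<subseteq> U" for r
    using leU[of r] card_of_ordLeq by blast
  then obtain g where g: "\<And>r. inj_on (g r) {t\<in>T. F t = r}" "\<And>r. g r ` {t\<in>T. F t = r} \<subseteq> U"
    by metis
  have "inj_on (\<lambda>t. (F t, g (F t) t)) T"
  proof (rule inj_onI)
    fix t t' assume "t \<in> T" "t' \<in> T" "(F t, g (F t) t) = (F t', g (F t') t')"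
    then show "t = t'" using g(1)[of "F t"] unfolding inj_on_def by auto
  qed
  moreover have "(\<lambda>t. (F t, g (F t) t)) ` T \<subseteq> (UNIV :: real set) \<times> U" using g(2) by blast
  ultimately have "|T| \<le>o |(UNIV :: real set) \<times> U|" using card_of_ordLeq by blast
  moreover have "|U| <o (card_of D)" unfolding U_def
    using card_of_underS[OF card_of_Card_order, of d D] d(1) unfolding Field_card_of by blast
  ultimately have TL: "|T| <o (card_of D)" using times_less[OF R] ordLeq_ordLess_trans by blast
  show False using not_ordLess_ordLeq[OF TL] ordIso_imp_ordLeq[OF ordIso_symmetric[OF TD]] by blast
qed




lemma not_line:
  fixes D :: "'a::real_normed_vector set" and u :: 'a
  assumes dw: "dens_witness D" and R: "|UNIV::real set| <o |D|"
  shows "range (\<lambda>t::real. t *\<^sub>R u) \<noteq> UNIV"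
proof
  assume H: "range (\<lambda>t::real. t *\<^sub>R u) = UNIV"
  define Q where "Q = (\<lambda>t::real. t *\<^sub>R u) ` \<rat>"
  have "(\<lambda>t::real. t *\<^sub>R u) ` closure \<rat> \<subseteq> closure Q"
  proof (rule image_closure_subset)
    show "continuous_on (closure \<rat>) (\<lambda>t::real. t *\<^sub>R u)" by (intro continuous_intros)
    show "closed (closure Q)" by simp
    show "(\<lambda>t::real. t *\<^sub>R u) ` \<rat> \<subseteq> closure Q" unfolding Q_def by (rule closure_subset)
  qed
  then have "closure Q = UNIV" using H Rats_closure_real by auto
  then have 1: "( |D|, |Q| ) \<in> ordLeq" using dw unfolding dens_witness_def by blast
  have 2: "|Q| \<le>o |\<rat> :: real set|" unfolding Q_def by (rule card_of_image)
  have 3: "|\<rat> :: real set| \<le>o |UNIV::real set|" by (rule card_of_mono1) simp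
  have "|D| \<le>o |UNIV::real set|" using ordLeq_transitive[OF ordLeq_transitive[OF 1 2] 3] .
  then show False using not_ordLess_ordLeq[OF R] by blast
qed

lemma line_lingraph:
  fixes w :: "'a::real_normed_vector"
  assumes w: "w \<noteq> 0"
  shows "lingraph (1/norm w) {(t *\<^sub>R w, t) | t. True}"
  unfolding lingraph_def
proof (intro conjI allI impI)
  fix x a b assume "(x,a) \<in> {(t *\<^sub>R w, t) | t. True}" "(x,b) \<in> {(t *\<^sub>R w, t) | t. True}"
  then have "a *\<^sub>R w = b *\<^sub>R w" by auto
  then show "a = b" using w by simp
next
  show "(0,0) \<in> {(t *\<^sub>R w, t) | t. True}" by (rule CollectI, rule exI[of _ 0]) simp
next
  fix x a y b assume "(x,a) \<in> {(t *\<^sub>R w, t) | t. True}" "(y,b) \<in> {(t *\<^sub>R w, t) | t. True}"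
  then have "x = a *\<^sub>R w" "y = b *\<^sub>R w" by auto
  then show "(x+y, a+b) \<in> {(t *\<^sub>R w, t) | t. True}"
    by (intro CollectI exI[of _ "a+b"]) (simp add: scaleR_add_left)
next
  fix x a c assume "(x,a) \<in> {(t *\<^sub>R w, t) | t. True}"
  then have "x = a *\<^sub>R w" by auto
  then show "(c *\<^sub>R x, c*a) \<in> {(t *\<^sub>R w, t) | t. True}"
    by (intro CollectI exI[of _ "c*a"]) simp
next
  fix x a assume "(x,a) \<in> {(t *\<^sub>R w, t) | t. True}"
  then have x: "x = a *\<^sub>R w" by auto
  have "1 / norm w * norm x = \<bar>a\<bar>" using w unfolding x by simp
  then show "a \<le> 1 / norm w * norm x" by simp
qed

lemma functional_for:
  fixes w :: "'a::real_normed_vector"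
  assumes w: "w \<noteq> 0"
  shows "\<exists>f::'a \<Rightarrow> real. bounded_linear f \<and> f w = 1"
proof -
  obtain f where f: "bounded_linear f" "\<forall>x a. (x,a) \<in> {(t *\<^sub>R w, t) | t. True} \<longrightarrow> f x = a"
    using hahn_banach[OF line_lingraph[OF w]] by auto
  have "(1 *\<^sub>R w, 1) \<in> {(t *\<^sub>R w, t) | t. True}" by blast
  then have "f (1 *\<^sub>R w) = 1" using f(2) by blast
  then have "f w = 1" by simp
  then show ?thesis using f(1) by blast
qed

lemma two_functionals:
  fixes D :: "'a::real_normed_vector set"
  assumes dw: "dens_witness D" and R: "|UNIV::real set| <o |D|"
  shows "\<exists>(f::'a \<Rightarrow> real) (g::'a \<Rightarrow> real) u v. bounded_linear f \<and> bounded_linear g \<and> f u = 1 \<and> f v = 0 \<and> g v = 1"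
proof -
  obtain w where w: "w \<notin> range (\<lambda>t::real. t *\<^sub>R (0::'a))" using not_line[OF dw R, of 0] by blast
  have w0: "w \<noteq> 0" using w by auto
  obtain f :: "'a \<Rightarrow> real" where f: "bounded_linear f" "f w = 1" using functional_for[OF w0] by blast
  obtain w2 where w2: "w2 \<notin> range (\<lambda>t::real. t *\<^sub>R w)" using not_line[OF dw R, of w] by blast
  define v where "v = w2 - f w2 *\<^sub>R w"
  have v0: "v \<noteq> 0"
  proof
    assume "v = 0"
    then have "w2 = f w2 *\<^sub>R w" unfolding v_def by simp
    then show False using w2 by blast
  qed
  have lf: "linear f" using f(1) by (rule bounded_linear.linear)
  have fv: "f v = 0" unfolding v_def using f
    by (simp add: linear_diff[OF lf] linear_scale[OF lf])
  obtain g :: "'a \<Rightarrow> real" where g: "bounded_linear g" "g v = 1" using functional_for[OF v0] by blast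
  show ?thesis using f g fv by blast
qed

theorem theorem3p9:
  fixes D :: "'a::banach set"
  assumes "dens_witness D"
    and "cf_geq (card_of D) (cardSuc (card_of (UNIV :: real set)))"
  shows "\<not> (\<exists>S::'a set. overcomplete_set S)"
proof
  assume "\<exists>S::'a set. overcomplete_set S"
  then obtain S D' :: "'a set" where dw': "dens_witness D'" and SD': "( |S|, |D'| ) \<in> ordIso"
    and oc: "\<forall>L. L \<subseteq> S \<and> ( |L|, |S| ) \<in> ordIso \<longrightarrow> closure (span L) = UNIV"
    unfolding overcomplete_set_def by blast
  have "( |D'|, |D| ) \<in> ordLeq" using dw' assms(1) unfolding dens_witness_def by blast
  moreover have "( |D|, |D'| ) \<in> ordLeq" using dw' assms(1) unfolding dens_witness_def by blast
  ultimately have "( |D'|, |D| ) \<in> ordIso" using ordIso_iff_ordLeq by blast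
  then have SD: "( |S|, |D| ) \<in> ordIso" using ordIso_transitive[OF SD'] by blast
  have R: "|UNIV::real set| <o |D|" using real_less_D[OF assms(2)] .
  obtain f g :: "'a \<Rightarrow> real" and u v :: 'a where fg: "bounded_linear f" "bounded_linear g" "f u = 1" "f v = 0" "g v = 1"
    using two_functionals[OF assms(1) R] by blast
  obtain a where a: "( |{s\<in>S. f s = a}|, |S| ) \<in> ordIso" using pigeon[OF assms(2) SD] by blast
  define S1 where "S1 = {s\<in>S. f s = a}"
  have S1S: "( |S1|, |S| ) \<in> ordIso" using a unfolding S1_def .
  have S1D: "( |S1|, |D| ) \<in> ordIso" using ordIso_transitive[OF S1S SD] .
  obtain b where b: "( |{s\<in>S1. g s = b}|, |S1| ) \<in> ordIso" using pigeon[OF assms(2) S1D] by blast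
  define L where "L = {s\<in>S1. g s = b}"
  have LS: "( |L|, |S| ) \<in> ordIso" using ordIso_transitive[OF b S1S] unfolding L_def .
  have "L \<subseteq> S" unfolding L_def S1_def by blast
  then have cl: "closure (span L) = UNIV" using oc LS by blast
  have "\<exists>(h::'a \<Rightarrow> real) z. bounded_linear h \<and> (\<forall>x\<in>L. h x = 0) \<and> h z \<noteq> 0"
  proof (cases "a = 0 \<and> b = 0")
    case True
    have "\<forall>x\<in>L. f x = 0" using True unfolding L_def S1_def by auto
    then have "bounded_linear f \<and> (\<forall>x\<in>L. f x = 0) \<and> f u \<noteq> 0" using fg by simp
    then show ?thesis by blast
  next
    case False
    define h where "h x = b * f x - a * g x" for x
    have hl: "bounded_linear h" unfolding h_def
      by (intro bounded_linear_sub bounded_linear_compose[OF bounded_linear_mult_right] fg(1,2))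
    have hL: "\<forall>x\<in>L. h x = 0" unfolding h_def L_def S1_def by auto
    show ?thesis
    proof (cases "a = 0")
      case True
      then have "h u \<noteq> 0" using False fg unfolding h_def by simp
      then show ?thesis using hl hL by blast
    next
      case a0: False
      then have "h v \<noteq> 0" using fg unfolding h_def by simp
      then show ?thesis using hl hL by blast
    qed
  qed
  then obtain h :: "'a \<Rightarrow> real" and z where h: "bounded_linear h" "\<forall>x\<in>L. h x = 0" "h z \<noteq> 0" by blast
  define K where "K = h -` {0}"
  have lh: "linear h" using h(1) by (rule bounded_linear.linear)
  have "subspace K" unfolding subspace_def K_def
    using linear_0[OF lh] linear_add[OF lh] linear_scale[OF lh] by simp
  then have "span L \<subseteq> K" using h(2) by (intro span_minimal) (auto simp: K_def)
  moreover have "closed K" unfolding K_def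
    by (rule continuous_closed_vimage) (auto intro: linear_continuous_at h(1))
  ultimately have "closure (span L) \<subseteq> K" by (rule closure_minimal)
  then have "z \<in> K" using cl by blast
  then show False using h(3) unfolding K_def by simp
qed


end
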